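(* Let $f\not\equiv 0$ be given by a Taylor series $f(z)=\sum_{k\ge0}a_kz^k$ with radius of convergence $R\in(0,\infty]$. For $0<r<R$ let $M_1(r)=\frac{1}{2\pi}\int_0^{2\pi}|f(re^{i\theta})|\,d\theta$ and, for $n$ with $a_n\neq0$, let $\kappa(n,r)=\dfrac{M_1(r)}{|a_n|r^n}$. Then, for every $n$ with $a_n\ne 0$ and for $0<r<R$: (a) $\kappa(n,r)$ is continuously differentiable with respect to $r$; (b) $\log\kappa(n,r)$ is a convex function of $\log r$.
   Context: $\kappa(n,r)$ equals the condition number $\int_0^{2\pi}|f(re^{i\theta})|d\theta\,/\,\big|\int_0^{2\pi}e^{-in\theta}f(re^{i\theta})d\theta\big|$ of the Cauchy integral for the $n$-th Taylor coefficient. *)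

theory Defs
  imports "HOL-Analysis.Analysis"
begin

definition taylor_fun :: "(nat \<Rightarrow> complex) \<Rightarrow> complex \<Rightarrow> complex" where
  "taylor_fun a z = (\<Sum>k. a k * z ^ k)"

definition M1 :: "(nat \<Rightarrow> complex) \<Rightarrow> real \<Rightarrow> real" where
  "M1 a r = (1 / (2 * pi)) *
     integral {0..2*pi} (\<lambda>\<theta>. cmod (taylor_fun a (complex_of_real r * exp (\<i> * complex_of_real \<theta>))))"

definition kappa :: "(nat \<Rightarrow> complex) \<Rightarrow> nat \<Rightarrow> real \<Rightarrow> real" where
  "kappa a n r = M1 a r / (cmod (a n) * r ^ n)"

end

theory Submission imports Defs "HOL-Complex_Analysis.Complex_Analysis" begin

lemma taylor_fun_eq: "taylor_fun a = eval_fps (Abs_fps a)"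
  by (simp add: fun_eq_iff taylor_fun_def eval_fps_def)

definition fd :: "(nat \<Rightarrow> complex) \<Rightarrow> complex \<Rightarrow> complex" where
  "fd a = eval_fps (fps_deriv (Abs_fps a))"

lemma fps_conv_radius_Abs: "fps_conv_radius (Abs_fps a) = conv_radius a"
  by (simp add: fps_conv_radius_def)

lemma tf_deriv:
  assumes "ereal (norm z) < conv_radius a"
  shows "(taylor_fun a has_field_derivative fd a z) (at z within A)"
  unfolding taylor_fun_eq fd_def
  by (rule has_field_derivative_eval_fps) (use assms in \<open>simp add: fps_conv_radius_Abs\<close>)

lemma tf_holo: "taylor_fun a holomorphic_on eball 0 (conv_radius a)"
  unfolding taylor_fun_eq
  by (rule holomorphic_on_eval_fps) (simp add: fps_conv_radius_Abs)

lemma tf_cont: "continuous_on (eball 0 (conv_radius a)) (taylor_fun a)"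
  using tf_holo holomorphic_on_imp_continuous_on by blast

lemma fd_cont: "continuous_on (eball 0 (conv_radius a)) (fd a)"
proof -
  have "eball 0 (conv_radius a) \<subseteq> eball 0 (fps_conv_radius (fps_deriv (Abs_fps a)))"
    using fps_conv_radius_deriv[of "Abs_fps a"] by (auto simp: fps_conv_radius_Abs)
  then show ?thesis unfolding fd_def
    using continuous_on_eval_fps continuous_on_subset by blast
qed

lemma tf_sums:
  assumes "ereal (norm z) < conv_radius a"
  shows "(\<lambda>k. a k * z ^ k) sums taylor_fun a z"
  unfolding taylor_fun_def using summable_in_conv_radius[OF assms] summable_sums by blast

definition Cf :: "(real \<Rightarrow> complex) \<Rightarrow> nat \<Rightarrow> complex" where
  "Cf \<phi> k = integral {0..2*pi} (\<lambda>\<theta>. exp(\<i> * of_real \<theta>) ^ k * \<phi> \<theta>)"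

definition Fphi :: "(nat \<Rightarrow> complex) \<Rightarrow> (real \<Rightarrow> complex) \<Rightarrow> complex \<Rightarrow> complex" where
  "Fphi a \<phi> z = (\<Sum>k. (a k * Cf \<phi> k) * z ^ k)"

definition admissible :: "(real \<Rightarrow> complex) \<Rightarrow> bool" where
  "admissible \<phi> \<longleftrightarrow> \<phi> \<in> borel_measurable (lebesgue_on {0..2*pi}) \<and> (\<forall>\<theta>. norm (\<phi> \<theta>) \<le> 1)"

lemma adm_int:
  assumes "admissible \<phi>" "continuous_on {0..2*pi} g"
  shows "(\<lambda>\<theta>. g \<theta> * \<phi> \<theta>) absolutely_integrable_on {0..2*pi}"
proof -
  have "(\<lambda>\<theta>. \<phi> \<theta> * g \<theta>) absolutely_integrable_on {0..2*pi}"
    by (rule absolutely_integrable_bounded_measurable_product[OF bilinear_times])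
       (use assms in \<open>auto simp: admissible_def bounded_iff intro!: absolutely_integrable_continuous_real\<close>)
  then show ?thesis by (simp add: mult.commute)
qed

lemma adm_int':
  assumes "admissible \<phi>" "continuous_on {0..2*pi} g"
  shows "(\<lambda>\<theta>. g \<theta> * \<phi> \<theta>) integrable_on {0..2*pi}"
  using adm_int[OF assms] absolutely_integrable_on_def by blast


lemma Cf_bound:
  assumes "admissible \<phi>"
  shows "norm (Cf \<phi> k) \<le> 2 * pi"
proof -
  have I: "(\<lambda>\<theta>. exp(\<i> * of_real \<theta>) ^ k * \<phi> \<theta>) integrable_on {0..2*pi}"
    by (rule adm_int'[OF assms]) (intro continuous_intros)
  have "norm (Cf \<phi> k) \<le> 1 * Henstock_Kurzweil_Integration.content {0..2*pi}"
    unfolding Cf_def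
    by (rule has_integral_bound_real[OF _ _ integrable_integral[OF I], of 1 "{}"])
       (use assms in \<open>auto simp: admissible_def norm_mult norm_power\<close>)
  then show ?thesis by simp
qed

lemma Fphi_summable:
  assumes z: "ereal (norm z) < conv_radius a" and adm: "admissible \<phi>"
  shows "summable (\<lambda>k. norm ((a k * Cf \<phi> k) * z ^ k))"
proof (rule summable_comparison_test)
  show "summable (\<lambda>k. 2 * pi * norm (a k * z ^ k))"
    using abs_summable_in_conv_radius[OF z] summable_mult by blast
  show "\<exists>N. \<forall>n\<ge>N. norm (norm (a n * Cf \<phi> n * z ^ n)) \<le> 2 * pi * norm (a n * z ^ n)"
  proof (intro exI allI impI)
    fix n :: nat
    have "norm (a n * Cf \<phi> n * z ^ n) = norm (Cf \<phi> n) * norm (a n * z ^ n)"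
      by (simp add: norm_mult)
    also have "\<dots> \<le> 2 * pi * norm (a n * z ^ n)"
      by (intro mult_right_mono Cf_bound adm) auto
    finally show "norm (norm (a n * Cf \<phi> n * z ^ n)) \<le> 2 * pi * norm (a n * z ^ n)" by simp
  qed
qed


lemma FL:
  assumes z: "ereal (norm z) < conv_radius a" and adm: "admissible \<phi>"
  shows "((\<lambda>\<theta>. taylor_fun a (z * exp(\<i> * of_real \<theta>)) * \<phi> \<theta>) has_integral Fphi a \<phi> z) {0..2*pi}"
proof -
  define e where "e \<theta> = exp(\<i> * of_real \<theta>)" for \<theta> :: real
  define P where "P N \<theta> = (\<Sum>k<N. a k * z^k * (e \<theta> ^ k * \<phi> \<theta>))" for N \<theta>
  define S where "S = (\<Sum>k. norm (a k * z ^ k))"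
  have sumS: "summable (\<lambda>k. norm (a k * z ^ k))"
    using abs_summable_in_conv_radius[OF z] .
  have ek: "(\<lambda>\<theta>. e \<theta> ^ k * \<phi> \<theta>) integrable_on {0..2*pi}" for k
    unfolding e_def by (rule adm_int'[OF adm]) (intro continuous_intros)
  have intP: "(P N has_integral (\<Sum>k<N. a k * z^k * Cf \<phi> k)) {0..2*pi}" for N
    unfolding P_def Cf_def e_def[symmetric]
    by (intro has_integral_sum has_integral_mult_right integrable_integral ek) auto
  have bnd: "norm (P N \<theta>) \<le> S" for N \<theta>
  proof -
    have "norm (P N \<theta>) \<le> (\<Sum>k<N. norm (a k * z^k * (e \<theta> ^ k * \<phi> \<theta>)))"
      unfolding P_def by (rule norm_sum)
    also have "\<dots> \<le> (\<Sum>k<N. norm (a k * z ^ k))"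
    proof (rule sum_mono)
      fix k
      have "norm (\<phi> \<theta>) \<le> 1" using adm by (auto simp: admissible_def)
      then have "norm (a k * z ^ k) * norm (\<phi> \<theta>) \<le> norm (a k * z ^ k)"
        by (simp add: mult_left_le)
      then show "norm (a k * z^k * (e \<theta> ^ k * \<phi> \<theta>)) \<le> norm (a k * z ^ k)"
        by (simp add: norm_mult norm_power e_def)
    qed
    also have "\<dots> \<le> S" unfolding S_def
      by (intro sum_le_suminf sumS) auto
    finally show ?thesis .
  qed
  have lim: "(\<lambda>N. P N \<theta>) \<longlonglongrightarrow> taylor_fun a (z * e \<theta>) * \<phi> \<theta>" for \<theta>
  proof -
    have "(\<lambda>k. a k * (z * e \<theta>) ^ k) sums taylor_fun a (z * e \<theta>)"
      by (rule tf_sums) (use z in \<open>simp add: norm_mult e_def\<close>)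
    then have "(\<lambda>N. (\<Sum>k<N. a k * (z * e \<theta>) ^ k) * \<phi> \<theta>) \<longlonglongrightarrow> taylor_fun a (z * e \<theta>) * \<phi> \<theta>"
      unfolding sums_def by (intro tendsto_mult_right)
    moreover have "(\<Sum>k<N. a k * (z * e \<theta>) ^ k) * \<phi> \<theta> = P N \<theta>" for N
      unfolding P_def sum_distrib_right by (intro sum.cong) (auto simp: power_mult_distrib)
    ultimately show ?thesis by simp
  qed
  have dc: "(\<lambda>\<theta>. taylor_fun a (z * e \<theta>) * \<phi> \<theta>) integrable_on {0..2*pi}"
      "(\<lambda>N. integral {0..2*pi} (P N)) \<longlonglongrightarrow> integral {0..2*pi} (\<lambda>\<theta>. taylor_fun a (z * e \<theta>) * \<phi> \<theta>)"
  proof -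
    have "(\<lambda>_. S) integrable_on {0..2*pi}" by (rule integrable_const_ivl)
    note D = dominated_convergence[of P "{0..2*pi}" "\<lambda>_. S" "\<lambda>\<theta>. taylor_fun a (z * e \<theta>) * \<phi> \<theta>",
       OF has_integral_integrable[OF intP] this bnd lim]
    show "(\<lambda>\<theta>. taylor_fun a (z * e \<theta>) * \<phi> \<theta>) integrable_on {0..2*pi}" by (rule D(1))
    show "(\<lambda>N. integral {0..2*pi} (P N)) \<longlonglongrightarrow> integral {0..2*pi} (\<lambda>\<theta>. taylor_fun a (z * e \<theta>) * \<phi> \<theta>)" by (rule D(2))
  qed
  have "(\<lambda>N. integral {0..2*pi} (P N)) \<longlonglongrightarrow> Fphi a \<phi> z"
  proof -
    have SS: "(\<lambda>k. (a k * Cf \<phi> k) * z ^ k) sums Fphi a \<phi> z"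
      unfolding Fphi_def by (rule summable_sums, rule summable_norm_cancel, rule Fphi_summable[OF z adm])
    have eq: "integral {0..2*pi} (P N) = (\<Sum>k<N. (a k * Cf \<phi> k) * z ^ k)" for N
    proof -
      have "integral {0..2*pi} (P N) = (\<Sum>k<N. a k * z^k * Cf \<phi> k)"
        by (rule integral_unique[OF intP])
      also have "\<dots> = (\<Sum>k<N. (a k * Cf \<phi> k) * z ^ k)"
        by (intro sum.cong refl) (simp only: mult_ac)
      finally show ?thesis .
    qed
    show ?thesis unfolding eq using SS unfolding sums_def .
  qed
  then have "integral {0..2*pi} (\<lambda>\<theta>. taylor_fun a (z * e \<theta>) * \<phi> \<theta>) = Fphi a \<phi> z"
    by (rule LIMSEQ_unique[OF dc(2)])
  with integrable_integral[OF dc(1)] show ?thesis unfolding e_def by simp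
qed


lemma periodic_integral:
  fixes G :: "real \<Rightarrow> real"
  assumes cont: "continuous_on UNIV G" and per: "\<And>x. G (x + 2*pi) = G x"
    and al: "0 \<le> \<alpha>" "\<alpha> \<le> 2*pi"
  shows "integral {0..2*pi} (\<lambda>\<theta>. G (\<theta> + \<alpha>)) = integral {0..2*pi} G"
proof -
  have int: "G integrable_on {u..v}" for u v
    by (rule integrable_continuous_interval) (use cont continuous_on_subset in blast)
  have "integral {0..2*pi} (\<lambda>\<theta>. G (\<theta> + \<alpha>)) = integral {0..2*pi} (G \<circ> ((+) \<alpha>))"
    by (simp add: o_def add.commute)
  also have "\<dots> = integral {\<alpha>..2*pi+\<alpha>} G"
    by (simp add: integral_shift_Icc_real add.commute)
  also have "\<dots> = integral {\<alpha>..2*pi} G + integral {2*pi..2*pi+\<alpha>} G"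
    using Henstock_Kurzweil_Integration.integral_combine[where a=\<alpha> and c="2*pi" and b="2*pi+\<alpha>" and f=G] al int by simp
  also have "integral {2*pi..2*pi+\<alpha>} G = integral {0..\<alpha>} (G \<circ> ((+) (2*pi)))"
    by (simp add: integral_shift_Icc_real add.commute)
  also have "integral {0..\<alpha>} (G \<circ> ((+) (2*pi))) = integral {0..\<alpha>} G"
    by (simp add: o_def per add.commute)
  also have "integral {\<alpha>..2*pi} G + integral {0..\<alpha>} G = integral {0..2*pi} G"
    using Henstock_Kurzweil_Integration.integral_combine[where a=0 and c=\<alpha> and b="2*pi" and f=G] al int by simp
  finally show ?thesis .
qed

lemma tf_circle_cont:
  assumes "ereal (norm z) < conv_radius a"
  shows "continuous_on UNIV (\<lambda>\<theta>::real. taylor_fun a (z * exp(\<i> * of_real \<theta>)))"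
proof (rule continuous_on_compose2[OF tf_cont])
  show "continuous_on UNIV (\<lambda>\<theta>::real. z * exp(\<i> * of_real \<theta>))" by (intro continuous_intros)
  show "(\<lambda>\<theta>::real. z * exp(\<i> * of_real \<theta>)) ` UNIV \<subseteq> eball 0 (conv_radius a)"
    using assms by (auto simp: norm_mult)
qed

lemma int_rotate:
  assumes "ereal (norm z) < conv_radius a"
  shows "integral {0..2*pi} (\<lambda>\<theta>. cmod (taylor_fun a (z * exp(\<i> * of_real \<theta>))))
       = 2 * pi * M1 a (norm z)"
proof -
  define G where "G \<theta> = cmod (taylor_fun a (of_real (norm z) * exp(\<i> * of_real \<theta>)))" for \<theta>
  define \<alpha> where "\<alpha> = Arg2pi z"
  have z: "z = of_real (norm z) * exp(\<i> * of_real \<alpha>)" unfolding \<alpha>_def by (rule Arg2pi_eq)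
  have cG: "continuous_on UNIV G" unfolding G_def
    by (intro continuous_intros tf_circle_cont) (use assms in simp)
  have per: "G (x + 2*pi) = G x" for x
  proof -
    have "exp (\<i> * (2 * complex_of_real pi)) = exp (2 * of_real pi * \<i>)"
      by (simp add: mult_ac)
    then have "exp(\<i> * of_real (x + 2*pi)) = exp(\<i> * of_real x)"
      by (simp add: distrib_left exp_add exp_two_pi_i)
    then show ?thesis unfolding G_def by simp
  qed
  have "integral {0..2*pi} (\<lambda>\<theta>. cmod (taylor_fun a (z * exp(\<i> * of_real \<theta>))))
      = integral {0..2*pi} (\<lambda>\<theta>. G (\<theta> + \<alpha>))"
  proof (rule integral_cong)
    fix \<theta> :: real
    have "z * exp(\<i> * of_real \<theta>) = of_real (norm z) * exp(\<i> * of_real (\<theta> + \<alpha>))"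
      by (subst z) (simp add: distrib_left exp_add mult_ac)
    then show "cmod (taylor_fun a (z * exp(\<i> * of_real \<theta>))) = G (\<theta> + \<alpha>)"
      unfolding G_def by simp
  qed
  also have "\<dots> = integral {0..2*pi} G"
    by (rule periodic_integral[OF cG per]) (use Arg2pi_ge_0 Arg2pi_lt_2pi in \<open>auto simp: \<alpha>_def less_imp_le\<close>)
  also have "\<dots> = 2 * pi * M1 a (norm z)"
    unfolding M1_def G_def by simp
  finally show ?thesis .
qed

lemma Fphi_bound:
  assumes z: "ereal (norm z) < conv_radius a" and adm: "admissible \<phi>"
  shows "norm (Fphi a \<phi> z) \<le> 2 * pi * M1 a (norm z)"
proof -
  have "Fphi a \<phi> z = integral {0..2*pi} (\<lambda>\<theta>. taylor_fun a (z * exp(\<i> * of_real \<theta>)) * \<phi> \<theta>)"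
    using FL[OF z adm] by (simp add: integral_unique)
  also have "norm \<dots> \<le> integral {0..2*pi} (\<lambda>\<theta>. cmod (taylor_fun a (z * exp(\<i> * of_real \<theta>))))"
  proof (rule integral_norm_bound_integral)
    show "(\<lambda>\<theta>. taylor_fun a (z * exp(\<i> * of_real \<theta>)) * \<phi> \<theta>) integrable_on {0..2*pi}"
      using FL[OF z adm] by blast
    show "(\<lambda>\<theta>. cmod (taylor_fun a (z * exp(\<i> * of_real \<theta>)))) integrable_on {0..2*pi}"
      by (intro integrable_continuous_interval continuous_intros continuous_on_subset[OF tf_circle_cont[OF z]]) auto
    fix \<theta> :: real
    have "norm (\<phi> \<theta>) \<le> 1" using adm by (auto simp: admissible_def)
    then show "norm (taylor_fun a (z * exp(\<i> * of_real \<theta>)) * \<phi> \<theta>) \<le> cmod (taylor_fun a (z * exp(\<i> * of_real \<theta>)))"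
      by (simp add: norm_mult mult_left_le)
  qed
  also have "\<dots> = 2 * pi * M1 a (norm z)" by (rule int_rotate[OF z])
  finally show ?thesis .
qed


lemma adm_cont:
  assumes "continuous_on {0..2*pi} \<phi>" "\<And>\<theta>. norm (\<phi> \<theta>) \<le> 1"
  shows "admissible \<phi>"
  unfolding admissible_def
  using assms by (auto intro!: continuous_imp_measurable_on_sets_lebesgue)

lemma int_exp_int:
  fixes m :: int
  assumes "m \<noteq> 0"
  shows "((\<lambda>\<theta>. exp(\<i> * of_int m * of_real \<theta>)) has_integral 0) {0..2*pi}"
proof -
  define F where "F w = exp(\<i> * of_int m * w) / (\<i> * of_int m)" for w :: complex
  have d: "(F has_field_derivative exp(\<i> * of_int m * w)) (at w)" for w
    unfolding F_def using assms
    by (auto intro!: derivative_eq_intros simp: field_simps)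
  have "((\<lambda>\<theta>. exp(\<i> * of_int m * of_real \<theta>)) has_integral (F (of_real (2*pi)) - F (of_real 0))) {0..2*pi}"
    by (rule fundamental_theorem_of_calculus)
       (auto intro!: has_vector_derivative_real_field d)
  moreover have "F (of_real (2*pi)) = F (of_real 0)"
  proof -
    have "exp(\<i> * of_int m * of_real (2*pi)) = exp((2 * of_int m * pi) * \<i>)"
      by (simp add: mult_ac)
    also have "\<dots> = 1" by (rule exp_integer_2pi) simp
    finally show ?thesis unfolding F_def by simp
  qed
  ultimately show ?thesis by simp
qed

lemma exp_prod_cnj:
  "exp(\<i> * of_real \<theta>) ^ k * cnj (exp(\<i> * of_real \<theta>)) ^ n
     = exp(\<i> * of_int (int k - int n) * of_real \<theta>)"
proof -
  have "exp(\<i> * of_real \<theta>) ^ k = exp(of_nat k * (\<i> * of_real \<theta>))"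
    by (simp add: exp_of_nat_mult)
  moreover have "cnj (exp(\<i> * of_real \<theta>)) ^ n = exp(of_nat n * (- (\<i> * of_real \<theta>)))"
  proof -
    have "cnj (exp(\<i> * of_real \<theta>)) ^ n = exp(- (\<i> * of_real \<theta>)) ^ n" by (simp add: exp_cnj)
    also have "\<dots> = exp(of_nat n * (- (\<i> * of_real \<theta>)))" by (rule exp_of_nat_mult[symmetric])
    finally show ?thesis .
  qed
  ultimately show ?thesis
    by (simp add: exp_add[symmetric] algebra_simps)
qed

definition phin :: "nat \<Rightarrow> real \<Rightarrow> complex" where
  "phin n \<theta> = cnj (exp(\<i> * of_real \<theta>)) ^ n"

lemma adm_phin: "admissible (phin n)"
  unfolding phin_def by (rule adm_cont) (auto intro!: continuous_intros simp: norm_power)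

lemma Cf_phin: "Cf (phin n) k = (if k = n then 2 * pi else 0)"
proof (cases "k = n")
  case True
  have "Cf (phin n) k = integral {0..2*pi} (\<lambda>\<theta>. 1)"
    unfolding Cf_def phin_def using True by (simp add: exp_prod_cnj)
  then show ?thesis using True by (simp add: scaleR_conv_of_real)
next
  case False
  have "Cf (phin n) k = integral {0..2*pi} (\<lambda>\<theta>. exp(\<i> * of_int (int k - int n) * of_real \<theta>))"
    unfolding Cf_def phin_def by (simp add: exp_prod_cnj)
  also have "\<dots> = 0"
    by (rule integral_unique, rule int_exp_int) (use False in simp)
  finally show ?thesis using False by simp
qed

lemma cauchy_est:
  assumes "0 \<le> r" "ereal r < conv_radius a"
  shows "cmod (a n) * r ^ n \<le> M1 a r"
proof -
  have z: "ereal (norm (complex_of_real r)) < conv_radius a" using assms by simp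
  have "(\<lambda>k. (a k * Cf (phin n) k) * of_real r ^ k) = (\<lambda>k. if k = n then a n * (2*pi) * of_real r ^ n else 0)"
    by (auto simp: Cf_phin)
  then have "Fphi a (phin n) (of_real r) = a n * (2*pi) * of_real r ^ n"
    unfolding Fphi_def using sums_single[of n "\<lambda>_. a n * (2*pi) * of_real r ^ n"] sums_unique
    by (metis (no_types, lifting))
  then have "norm (a n * (2*pi) * of_real r ^ n) \<le> 2 * pi * M1 a r"
    using Fphi_bound[OF z adm_phin, of n] assms by simp
  then show ?thesis using assms by (simp add: norm_mult norm_power)
qed


lemma Fphi_holo:
  assumes adm: "admissible \<phi>"
  shows "Fphi a \<phi> holomorphic_on eball 0 (conv_radius a)"
proof -
  have eq: "Fphi a \<phi> = eval_fps (Abs_fps (\<lambda>k. a k * Cf \<phi> k))"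
    by (simp add: fun_eq_iff Fphi_def eval_fps_def)
  have "conv_radius a \<le> conv_radius (\<lambda>k. a k * Cf \<phi> k)"
  proof (rule conv_radius_geI_ex')
    fix r :: real assume "0 < r" "ereal r < conv_radius a"
    then have "ereal (norm (complex_of_real r)) < conv_radius a" by simp
    from Fphi_summable[OF this adm] show "summable (\<lambda>n. a n * Cf \<phi> n * complex_of_real r ^ n)"
      by (rule summable_norm_cancel)
  qed
  then show ?thesis unfolding eq
    by (intro holomorphic_on_eval_fps) (auto simp: fps_conv_radius_def)
qed

lemma mul_sgn_cnj: "w * sgn (cnj w) = complex_of_real (cmod w)"
proof (cases "w = 0")
  case False
  have "w * sgn (cnj w) = (w * cnj w) / complex_of_real (cmod w)"
    by (simp add: sgn_eq)
  also have "\<dots> = complex_of_real (cmod w)"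
    using False by (simp add: complex_norm_square[symmetric] power2_eq_square)
  finally show ?thesis .
qed simp

lemma Fphi_attain:
  assumes r: "0 \<le> r" "ereal r < conv_radius a"
  defines "\<phi> \<equiv> (\<lambda>\<theta>. sgn (cnj (taylor_fun a (complex_of_real r * exp(\<i> * of_real \<theta>)))))"
  shows "admissible \<phi>" "Fphi a \<phi> (complex_of_real r) = complex_of_real (2 * pi * M1 a r)"
proof -
  have z: "ereal (norm (complex_of_real r)) < conv_radius a" using r by simp
  have cg: "continuous_on UNIV (\<lambda>\<theta>. cnj (taylor_fun a (complex_of_real r * exp(\<i> * of_real \<theta>))))"
    by (intro continuous_intros tf_circle_cont z)
  show adm: "admissible \<phi>"
    unfolding admissible_def \<phi>_def
  proof
    have "(\<lambda>\<theta>. cnj (taylor_fun a (complex_of_real r * exp(\<i> * of_real \<theta>)))) \<in> borel_measurable (lebesgue_on {0..2*pi})"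
      by (rule continuous_imp_measurable_on_sets_lebesgue) (use cg continuous_on_subset in auto)
    then show "(\<lambda>\<theta>. sgn (cnj (taylor_fun a (complex_of_real r * exp(\<i> * of_real \<theta>))))) \<in> borel_measurable (lebesgue_on {0..2*pi})"
      by (rule measurable_compose[OF _ borel_measurable_sgn])
    show "\<forall>\<theta>. cmod (sgn (cnj (taylor_fun a (complex_of_real r * exp (\<i> * complex_of_real \<theta>))))) \<le> 1"
      by (simp add: norm_sgn)
  qed
  have "((\<lambda>\<theta>. complex_of_real (cmod (taylor_fun a (complex_of_real r * exp(\<i> * of_real \<theta>))))) has_integral Fphi a \<phi> (complex_of_real r)) {0..2*pi}"
    using FL[OF z adm] unfolding \<phi>_def mul_sgn_cnj .
  moreover have "((\<lambda>\<theta>. complex_of_real (cmod (taylor_fun a (complex_of_real r * exp(\<i> * of_real \<theta>))))) has_integral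
      complex_of_real (integral {0..2*pi} (\<lambda>\<theta>. cmod (taylor_fun a (complex_of_real r * exp(\<i> * of_real \<theta>)))))) {0..2*pi}"
    by (intro has_integral_of_real integrable_integral integrable_continuous_interval continuous_intros
          continuous_on_subset[OF tf_circle_cont[OF z]]) auto
  ultimately have "Fphi a \<phi> (complex_of_real r) = complex_of_real (integral {0..2*pi} (\<lambda>\<theta>. cmod (taylor_fun a (complex_of_real r * exp(\<i> * of_real \<theta>)))))"
    using has_integral_unique by blast
  also have "\<dots> = complex_of_real (2 * pi * M1 a r)"
    using int_rotate[OF z] r by simp
  finally show "Fphi a \<phi> (complex_of_real r) = complex_of_real (2 * pi * M1 a r)" .
qed

lemma M1_nonneg: "0 \<le> M1 a r"
  unfolding M1_def
  by (cases "(\<lambda>\<theta>. cmod (taylor_fun a (complex_of_real r * exp(\<i> * of_real \<theta>)))) integrable_on {0..2*pi}")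
     (auto intro!: divide_nonneg_pos integral_nonneg simp: not_integrable_integral)


lemma three_circles_int:
  assumes r: "0 < r1" "r1 < r" "r < r2" and R: "ereal r2 < conv_radius a"
  shows "(M1 a r)^q * r powi p \<le> max ((M1 a r1)^q * r1 powi p) ((M1 a r2)^q * r2 powi p)"
proof -
  have Rr: "ereal r < conv_radius a" using r R by (meson ereal_less_le less_imp_le order.strict_trans1)
  define \<phi> where "\<phi> = (\<lambda>\<theta>. sgn (cnj (taylor_fun a (complex_of_real r * exp(\<i> * of_real \<theta>)))))"
  have adm: "admissible \<phi>" and att: "Fphi a \<phi> (complex_of_real r) = complex_of_real (2 * pi * M1 a r)"
    using Fphi_attain[of r a] r Rr unfolding \<phi>_def by auto
  define G where "G z = Fphi a \<phi> z ^ q * z powi p" for z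
  define S where "S = cball (0::complex) r2 - ball 0 r1"
  define B where "B = (2*pi)^q * max ((M1 a r1)^q * r1 powi p) ((M1 a r2)^q * r2 powi p)"
  have SR: "S \<subseteq> eball 0 (conv_radius a) - {0}"
  proof
    fix z assume "z \<in> S"
    then have "norm z \<le> r2" "r1 \<le> norm z" by (auto simp: S_def)
    moreover have "ereal (norm z) \<le> ereal r2" using \<open>norm z \<le> r2\<close> by simp
    ultimately show "z \<in> eball 0 (conv_radius a) - {0}"
      using R r order.strict_trans1[OF \<open>ereal (norm z) \<le> ereal r2\<close> R] by auto
  qed
  have holo: "G holomorphic_on (eball 0 (conv_radius a) - {0})"
    unfolding G_def
    by (intro holomorphic_intros holomorphic_on_subset[OF Fphi_holo[OF adm]]) auto
  have clS: "closure S = S" unfolding S_def by (blast intro!: closure_closed)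
  have inS: "interior S = ball 0 r2 - cball 0 r1"
    unfolding S_def using r by (simp add: interior_diff)
  have "norm (G (complex_of_real r)) \<le> B"
  proof (rule maximum_modulus_frontier[of G S])
    show "G holomorphic_on interior S"
      by (rule holomorphic_on_subset[OF holo]) (use SR interior_subset in blast)
    show "continuous_on (closure S) G"
      unfolding clS by (rule holomorphic_on_imp_continuous_on, rule holomorphic_on_subset[OF holo SR])
    show "bounded S" unfolding S_def by (rule bounded_subset[OF bounded_cball]) auto
    show "complex_of_real r \<in> S" unfolding S_def using r by auto
    fix z assume "z \<in> frontier S"
    then have zS: "z \<in> S" and "z \<notin> interior S" unfolding frontier_def clS by auto
    have nz: "norm z = r1 \<or> norm z = r2" using zS \<open>z \<notin> interior S\<close> unfolding inS by (auto simp: S_def)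
    have zR: "ereal (norm z) < conv_radius a" using SR zS by auto
    have "norm (G z) = norm (Fphi a \<phi> z) ^ q * norm z powi p"
      by (simp add: G_def norm_mult norm_power norm_power_int)
    also have "\<dots> \<le> (2 * pi * M1 a (norm z)) ^ q * norm z powi p"
      by (intro mult_right_mono power_mono Fphi_bound zR adm) auto
    also have "\<dots> = (2*pi)^q * ((M1 a (norm z))^q * norm z powi p)"
      by (simp add: power_mult_distrib)
    also have "\<dots> \<le> B" unfolding B_def
      using nz by (intro mult_left_mono) auto
    finally show "norm (G z) \<le> B" .
  qed
  moreover have "norm (G (complex_of_real r)) = (2*pi)^q * ((M1 a r)^q * r powi p)"
    using r M1_nonneg[of a r]
    by (simp add: G_def att norm_mult norm_power norm_power_int power_mult_distrib)
  ultimately show ?thesis unfolding B_def by simp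
qed


lemma rat_ineq:
  assumes t: "t1 < t" "t < t2" and R: "ereal (exp t2) < conv_radius a" and q: "q > 0"
  shows "M1 a (exp t) * exp (of_int p / of_nat q * t)
     \<le> max (M1 a (exp t1) * exp (of_int p / of_nat q * t1)) (M1 a (exp t2) * exp (of_int p / of_nat q * t2))"
proof -
  define u where "u s = M1 a (exp s) * exp (of_int p / of_nat q * s)" for s
  have u0: "0 \<le> u s" for s unfolding u_def by (intro mult_nonneg_nonneg M1_nonneg) auto
  have uq: "u s ^ q = (M1 a (exp s))^q * exp s powi p" for s
  proof -
    have "exp (of_int p / of_nat q * s) ^ q = exp (of_nat q * (of_int p / of_nat q * s))"
      by (rule exp_of_nat_mult[symmetric])
    also have "of_nat q * (of_int p / of_nat q * s) = of_int p * s" using q by simp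
    also have "exp (of_int p * s) = exp s powi p" by (simp add: exp_power_int)
    finally show ?thesis unfolding u_def by (simp add: power_mult_distrib)
  qed
  have "(M1 a (exp t))^q * exp t powi p \<le> max ((M1 a (exp t1))^q * exp t1 powi p) ((M1 a (exp t2))^q * exp t2 powi p)"
    by (rule three_circles_int) (use t R in auto)
  then have "u t ^ q \<le> max (u t1 ^ q) (u t2 ^ q)" unfolding uq .
  also have "max (u t1 ^ q) (u t2 ^ q) = max (u t1) (u t2) ^ q"
    using u0[of t1] u0[of t2] power_mono[of "u t1" "u t2" q] power_mono[of "u t2" "u t1" q]
    by (auto simp: max_def)
  finally have "u t ^ q \<le> max (u t1) (u t2) ^ q" .
  moreover have "Suc (q - 1) = q" using q by simp
  ultimately have "u t ^ Suc (q - 1) \<le> max (u t1) (u t2) ^ Suc (q - 1)" by simp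
  moreover have "0 \<le> max (u t1) (u t2)" using u0[of t1] by (simp add: le_max_iff_disj)
  ultimately have "u t \<le> max (u t1) (u t2)" by (rule power_le_imp_le_base)
  then show ?thesis unfolding u_def .
qed


lemma convex_from_rat:
  fixes h :: "real \<Rightarrow> real"
  assumes P: "\<And>\<beta> t1 t t2. \<beta> \<in> \<rat> \<Longrightarrow> t1 < t \<Longrightarrow> t < t2 \<Longrightarrow> t1 \<in> D \<Longrightarrow> t2 \<in> D \<Longrightarrow>
              h t + \<beta> * t \<le> max (h t1 + \<beta> * t1) (h t2 + \<beta> * t2)"
    and D: "convex D"
  shows "convex_on D h"
proof (rule convex_on_linorderI[OF _ D])
  fix u x y :: real
  assume u: "0 < u" "u < 1" and xy: "x \<in> D" "y \<in> D" "x < y"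
  define t where "t = (1 - u) *\<^sub>R x + u *\<^sub>R y"
  have t1: "t = x + u * (y - x)" "t = y - (1 - u) * (y - x)" unfolding t_def by (simp_all add: algebra_simps)
  have "0 < u * (y - x)" "0 < (1 - u) * (y - x)" using u xy by simp_all
  then have tt: "x < t" "t < y" using t1 by linarith+
  define b0 where "b0 = (h x - h y) / (y - x)"
  define V where "V = h x + b0 * x"
  have V2: "V = h y + b0 * y" unfolding V_def b0_def using xy by (simp add: field_simps)
  define K where "K = \<bar>x\<bar> + \<bar>y\<bar> + \<bar>t\<bar> + 1"
  have K: "K > 0" unfolding K_def by simp
  have main: "h t + b0 * t \<le> V"
  proof (rule field_le_epsilon)
    fix e :: real assume e: "0 < e"
    have "b0 < b0 + e / K" using e K by simp
    then obtain b where b: "b \<in> \<rat>" "b0 < b" "b < b0 + e / K"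
      using Rats_dense_in_real by blast
    define d where "d = b - b0"
    have d0: "0 < d" using b unfolding d_def by simp
    have "d < e / K" using b unfolding d_def by simp
    then have dK: "d * K < e" using K by (simp add: field_simps)
    have "h t + b * t \<le> max (h x + b * x) (h y + b * y)"
      by (rule P) (use b tt xy in auto)
    also have "\<dots> = max (V + d * x) (V + d * y)"
      unfolding d_def using V2 V_def by (simp add: algebra_simps)
    also have "\<dots> \<le> V + d * (\<bar>x\<bar> + \<bar>y\<bar>)"
    proof -
      have "d * x \<le> d * (\<bar>x\<bar> + \<bar>y\<bar>)" by (rule mult_left_mono) (use d0 in auto)
      moreover have "d * y \<le> d * (\<bar>x\<bar> + \<bar>y\<bar>)" by (rule mult_left_mono) (use d0 in auto)
      ultimately show ?thesis by simp
    qed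
    finally have 1: "h t + b * t \<le> V + d * (\<bar>x\<bar> + \<bar>y\<bar>)" .
    have 2: "d * (- t) \<le> d * (\<bar>t\<bar> + 1)" by (rule mult_left_mono) (use d0 in auto)
    have "h t + b0 * t = h t + b * t + d * (- t)" unfolding d_def by (simp add: algebra_simps)
    also have "\<dots> \<le> V + d * (\<bar>x\<bar> + \<bar>y\<bar>) + d * (\<bar>t\<bar> + 1)" using 1 2 by linarith
    also have "\<dots> = V + d * K" unfolding K_def by (simp add: algebra_simps)
    finally show "h t + b0 * t \<le> V + e" using dK by linarith
  qed
  have e1: "V - b0 * t = h x - u * (b0 * (y - x))" unfolding V_def t1(1) by (simp add: algebra_simps)
  have e2: "b0 * (y - x) = h x - h y" unfolding b0_def using xy by simp
  have "V - b0 * t = (1 - u) * h x + u * h y"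
    unfolding e1 e2 by (simp add: algebra_simps)
  with main show "h ((1 - u) *\<^sub>R x + u *\<^sub>R y) \<le> (1 - u) * h x + u * h y"
    unfolding t_def[symmetric] by simp
qed


lemma M1_pos:
  assumes "a n \<noteq> 0" "0 < r" "ereal r < conv_radius a"
  shows "0 < M1 a r"
proof -
  have "0 < cmod (a n) * r ^ n" using assms by simp
  also have "\<dots> \<le> M1 a r" by (rule cauchy_est) (use assms in auto)
  finally show ?thesis .
qed

lemma convex_part:
  assumes an: "a n \<noteq> 0"
  shows "convex_on {t. ereal (exp t) < conv_radius a} (\<lambda>t. ln (kappa a n (exp t)))"
proof (rule convex_from_rat)
  show "convex {t. ereal (exp t) < conv_radius a}"
  proof (rule is_interval_convex)
    show "is_interval {t. ereal (exp t) < conv_radius a}"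
      unfolding is_interval_1
    proof (intro ballI allI impI, elim conjE)
      fix x y z :: real
      assume "x \<in> {t. ereal (exp t) < conv_radius a}" "y \<in> {t. ereal (exp t) < conv_radius a}" "x \<le> z" "z \<le> y"
      moreover have zy: "ereal (exp z) \<le> ereal (exp y)" using \<open>z \<le> y\<close> by simp
      ultimately show "z \<in> {t. ereal (exp t) < conv_radius a}"
        using order.strict_trans1[OF zy] by auto
    qed
  qed
next
  fix \<beta> t1 t t2 :: real
  assume b: "\<beta> \<in> \<rat>" and t: "t1 < t" "t < t2"
    and D: "t1 \<in> {t. ereal (exp t) < conv_radius a}" "t2 \<in> {t. ereal (exp t) < conv_radius a}"
  have R2: "ereal (exp t2) < conv_radius a" using D by simp
  have inD: "ereal (exp s) < conv_radius a" if "s \<le> t2" for s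
  proof -
    have "ereal (exp s) \<le> ereal (exp t2)" using that by simp
    then show ?thesis using R2 order.strict_trans1 by blast
  qed
  have Mpos: "0 < M1 a (exp s)" if "s \<le> t2" for s
    by (rule M1_pos[where a=a and n=n, OF an]) (use inD[OF that] in auto)
  define \<gamma> where "\<gamma> = \<beta> - of_nat n"
  have "\<gamma> \<in> \<rat>" unfolding \<gamma>_def using b by simp
  then obtain p b' where pb: "b' > 0" "\<gamma> = of_int p / of_int b'" by (rule Rats_cases')
  define q where "q = nat b'"
  have q: "q > 0" "\<gamma> = of_int p / of_nat q" using pb unfolding q_def by auto
  define L where "L s = ln (M1 a (exp s)) + \<gamma> * s" for s
  have eL: "M1 a (exp s) * exp (\<gamma> * s) = exp (L s)" if "s \<le> t2" for s
    unfolding L_def using Mpos[OF that] by (simp add: exp_add)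
  have "M1 a (exp t) * exp (of_int p / of_nat q * t)
     \<le> max (M1 a (exp t1) * exp (of_int p / of_nat q * t1)) (M1 a (exp t2) * exp (of_int p / of_nat q * t2))"
    by (rule rat_ineq[OF t R2 q(1)])
  then have "exp (L t) \<le> max (exp (L t1)) (exp (L t2))"
    using eL[of t] eL[of t1] eL[of t2] t unfolding q(2)[symmetric] by simp
  also have "\<dots> = exp (max (L t1) (L t2))" by (simp add: max_def)
  finally have LL: "L t \<le> max (L t1) (L t2)" by simp
  have hk: "ln (kappa a n (exp s)) + \<beta> * s = L s - ln (cmod (a n))" if "s \<le> t2" for s
  proof -
    have "ln (kappa a n (exp s)) = ln (M1 a (exp s)) - (ln (cmod (a n)) + ln (exp s ^ n))"
      unfolding kappa_def using Mpos[OF that] an by (simp add: ln_div ln_mult)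
    also have "ln (exp s ^ n) = of_nat n * s" by (simp add: exp_of_nat_mult[symmetric])
    finally show ?thesis unfolding L_def \<gamma>_def by (simp add: algebra_simps)
  qed
  show "ln (kappa a n (exp t)) + \<beta> * t
     \<le> max (ln (kappa a n (exp t1)) + \<beta> * t1) (ln (kappa a n (exp t2)) + \<beta> * t2)"
    using LL t by (simp add: hk)
qed


lemma negligible_countable_set:
  fixes S :: "'a::euclidean_space set"
  assumes "countable S"
  shows "negligible S"
proof -
  have "negligible (\<Union>((\<lambda>x. {x}) ` S))"
    by (rule negligible_countable_Union) (use assms in auto)
  then show ?thesis by simp
qed

lemma deriv_under_int:
  fixes h :: "real \<Rightarrow> real \<Rightarrow> real"
  assumes I: "open I" "x0 \<in> I"
    and int: "\<And>x. x \<in> I \<Longrightarrow> h x integrable_on {a..b}"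
    and lip: "\<And>x \<theta>. x \<in> I \<Longrightarrow> \<theta> \<in> {a..b} \<Longrightarrow> \<bar>h x \<theta> - h x0 \<theta>\<bar> \<le> B * \<bar>x - x0\<bar>"
    and N: "negligible N"
    and der: "\<And>\<theta>. \<theta> \<in> {a..b} - N \<Longrightarrow> ((\<lambda>x. h x \<theta>) has_real_derivative g \<theta>) (at x0)"
  shows "((\<lambda>x. integral {a..b} (h x)) has_real_derivative integral {a..b} g) (at x0)"
    "g integrable_on {a..b}"
proof -
  define G where "G \<theta> = (if \<theta> \<in> N then 0 else g \<theta>)" for \<theta>
  define Q where "Q x \<theta> = (h x \<theta> - h x0 \<theta>) / (x - x0)" for x \<theta>
  have Qint: "Q x integrable_on {a..b}" if "x \<in> I" for x
    unfolding Q_def using int[OF that] int[OF I(2)]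
    by (intro integrable_on_divide integrable_diff) auto
  have Qb: "\<bar>Q x \<theta>\<bar> \<le> \<bar>B\<bar>" if "x \<in> I" "x \<noteq> x0" "\<theta> \<in> {a..b}" for x \<theta>
  proof -
    have "\<bar>h x \<theta> - h x0 \<theta>\<bar> \<le> \<bar>B\<bar> * \<bar>x - x0\<bar>"
      using lip[OF that(1,3)] by (meson abs_ge_self abs_ge_zero mult_right_mono order_trans)
    then show ?thesis unfolding Q_def using that by (simp add: abs_divide divide_le_eq)
  qed
  have Qlim: "(\<lambda>i. Q (X i) \<theta>) \<longlonglongrightarrow> g \<theta>"
    if X: "\<And>i. X i \<in> I - {x0}" "X \<longlonglongrightarrow> x0" and \<theta>: "\<theta> \<in> {a..b} - N" for X \<theta>
  proof -
    have "((\<lambda>y. (h y \<theta> - h x0 \<theta>) / (y - x0)) \<longlongrightarrow> g \<theta>) (at x0)"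
      using der[OF \<theta>] by (simp add: has_field_derivative_iff)
    then have "((\<lambda>y. (h y \<theta> - h x0 \<theta>) / (y - x0)) \<circ> X) \<longlonglongrightarrow> g \<theta>"
      unfolding tendsto_at_iff_sequentially using X by auto
    then show ?thesis by (simp add: Q_def o_def)
  qed
  have main: "((\<lambda>i. integral {a..b} (Q (X i))) \<longlonglongrightarrow> integral {a..b} g) \<and> g integrable_on {a..b}"
    if X: "\<And>i. X i \<in> I - {x0}" "X \<longlonglongrightarrow> x0" for X
  proof -
    define q where "q i \<theta> = (if \<theta> \<in> N then 0 else Q (X i) \<theta>)" for i \<theta>
    have qint: "q i integrable_on {a..b}" for i
      by (rule integrable_spike[OF Qint[of "X i"] N]) (use X in \<open>auto simp: q_def\<close>)
    have qb: "norm (q i \<theta>) \<le> \<bar>B\<bar>" if "\<theta> \<in> {a..b}" for i \<theta>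
      using Qb[of "X i" \<theta>] X that by (auto simp: q_def)
    have ql: "(\<lambda>i. q i \<theta>) \<longlonglongrightarrow> G \<theta>" if "\<theta> \<in> {a..b}" for \<theta>
      using Qlim[OF X, of \<theta>] that by (cases "\<theta> \<in> N") (auto simp: q_def G_def)
    have "(\<lambda>_. \<bar>B\<bar>) integrable_on {a..b}" by (rule integrable_const_ivl)
    note D = dominated_convergence[of q "{a..b}" "\<lambda>_. \<bar>B\<bar>" G, OF qint this qb ql]
    have eqG: "integral {a..b} G = integral {a..b} g"
      by (rule integral_spike[OF N]) (auto simp: G_def)
    have eqq: "integral {a..b} (q i) = integral {a..b} (Q (X i))" for i
      by (rule integral_spike[OF N]) (auto simp: q_def)
    have "g integrable_on {a..b}"
      by (rule integrable_spike[OF D(1) N]) (auto simp: G_def)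
    with D(2) show ?thesis unfolding eqG eqq by simp
  qed
  show "g integrable_on {a..b}"
  proof -
    obtain e where e: "e > 0" "ball x0 e \<subseteq> I" using I open_contains_ball by blast
    define X where "X i = x0 + e / 2 * inverse (real (Suc i))" for i
    have "X i \<in> I - {x0}" for i
    proof -
      have "0 < e / 2 * inverse (real (Suc i))" using e by simp
      moreover have "e / 2 * inverse (real (Suc i)) < e"
      proof -
        have "inverse (real (Suc i)) \<le> 1" by (rule inverse_le_1_iff[THEN iffD2]) simp
        then have "e / 2 * inverse (real (Suc i)) \<le> e / 2" using e by (intro mult_left_le) auto
        then show ?thesis using e by linarith
      qed
      ultimately show ?thesis using e unfolding X_def by (auto simp: dist_real_def)
    qed
    moreover have "X \<longlonglongrightarrow> x0"
    proof -
      have "(\<lambda>i. e / 2 * inverse (real (Suc i))) \<longlonglongrightarrow> 0"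
        using tendsto_mult_right_zero[OF LIMSEQ_inverse_real_of_nat, of "e/2"] by simp
      then have "(\<lambda>i. x0 + e / 2 * inverse (real (Suc i))) \<longlonglongrightarrow> x0 + 0"
        by (intro tendsto_add tendsto_const)
      then show ?thesis unfolding X_def by simp
    qed
    ultimately show ?thesis using main by blast
  qed
  have "((\<lambda>y. (integral {a..b} (h y) - integral {a..b} (h x0)) / (y - x0)) \<longlongrightarrow> integral {a..b} g) (at x0 within I)"
    unfolding tendsto_at_iff_sequentially
  proof (intro allI impI)
    fix X assume X: "\<forall>i. X i \<in> I - {x0}" "X \<longlonglongrightarrow> x0"
    have "integral {a..b} (Q (X i)) = (integral {a..b} (h (X i)) - integral {a..b} (h x0)) / (X i - x0)" for i
      unfolding Q_def using X int[of "X i"] int[OF I(2)]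
      by (simp add: integral_diff integral_divide)
    then show "((\<lambda>y. (integral {a..b} (h y) - integral {a..b} (h x0)) / (y - x0)) \<circ> X) \<longlonglongrightarrow> integral {a..b} g"
      using main[of X] X by (simp add: o_def)
  qed
  then show "((\<lambda>x. integral {a..b} (h x)) has_real_derivative integral {a..b} g) (at x0)"
    using at_within_open[OF I(2,1)] by (simp add: has_field_derivative_iff)
qed

lemma cont_under_int:
  fixes k :: "real \<Rightarrow> real \<Rightarrow> real"
  assumes I: "open I" "x0 \<in> I"
    and int: "\<And>x. x \<in> I \<Longrightarrow> k x integrable_on {a..b}"
    and bnd: "\<And>x \<theta>. x \<in> I \<Longrightarrow> \<theta> \<in> {a..b} \<Longrightarrow> \<bar>k x \<theta>\<bar> \<le> B"
    and N: "negligible N"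
    and lim: "\<And>\<theta>. \<theta> \<in> {a..b} - N \<Longrightarrow> ((\<lambda>x. k x \<theta>) \<longlongrightarrow> k x0 \<theta>) (at x0)"
  shows "isCont (\<lambda>x. integral {a..b} (k x)) x0"
proof -
  have "((\<lambda>x. integral {a..b} (k x)) \<longlongrightarrow> integral {a..b} (k x0)) (at x0 within I)"
    unfolding tendsto_at_iff_sequentially
  proof (intro allI impI)
    fix X assume X: "\<forall>i. X i \<in> I - {x0}" "X \<longlonglongrightarrow> x0"
    define q where "q i \<theta> = (if \<theta> \<in> N then k x0 \<theta> else k (X i) \<theta>)" for i \<theta>
    have qint: "q i integrable_on {a..b}" for i
      by (rule integrable_spike[OF int[of "X i"] N]) (use X in \<open>auto simp: q_def\<close>)
    have qb: "norm (q i \<theta>) \<le> B" if "\<theta> \<in> {a..b}" for i \<theta>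
      using bnd[of "X i" \<theta>] bnd[OF I(2), of \<theta>] X that by (auto simp: q_def)
    have ql: "(\<lambda>i. q i \<theta>) \<longlonglongrightarrow> k x0 \<theta>" if "\<theta> \<in> {a..b}" for \<theta>
    proof (cases "\<theta> \<in> N")
      case False
      then have "((\<lambda>x. k x \<theta>) \<circ> X) \<longlonglongrightarrow> k x0 \<theta>"
        using lim[of \<theta>] that X unfolding tendsto_at_iff_sequentially by auto
      then show ?thesis using False by (simp add: q_def o_def)
    qed (simp add: q_def)
    have "(\<lambda>_. B) integrable_on {a..b}" by (rule integrable_const_ivl)
    note D = dominated_convergence[of q "{a..b}" "\<lambda>_. B" "k x0", OF qint this qb ql]
    have eqq: "integral {a..b} (q i) = integral {a..b} (k (X i))" for i
      by (rule integral_spike[OF N]) (auto simp: q_def)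
    show "((\<lambda>x. integral {a..b} (k x)) \<circ> X) \<longlonglongrightarrow> integral {a..b} (k x0)"
      using D(2) unfolding eqq by (simp add: o_def)
  qed
  then show ?thesis
    using at_within_open[OF I(2,1)] by (simp add: isCont_def)
qed


lemma exp_i_eq_imp:
  assumes "exp (\<i> * of_real \<theta>) = exp (\<i> * of_real \<theta>0)"
  shows "\<theta> \<in> range (\<lambda>n::int. \<theta>0 + of_int (2 * n) * pi)"
proof -
  obtain n :: int where n: "\<i> * complex_of_real \<theta> = \<i> * complex_of_real \<theta>0 + (of_int (2 * n) * pi) * \<i>"
    using assms exp_eq by blast
  then have "Im (\<i> * complex_of_real \<theta>) = Im (\<i> * complex_of_real \<theta>0 + (of_int (2 * n) * pi) * \<i>)" by simp
  then have "\<theta> = \<theta>0 + of_int (2 * n) * pi" by simp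
  then show ?thesis by blast
qed

lemma zeros_negl:
  assumes an: "a n \<noteq> 0" and r: "0 < r" "ereal r < conv_radius a"
  shows "negligible {\<theta>. taylor_fun a (complex_of_real r * exp(\<i> * of_real \<theta>)) = 0}"
proof -
  define S where "S = eball (0::complex) (conv_radius a)"
  have sub: "sphere 0 r \<subseteq> S" using r by (auto simp: S_def)
  have fin: "finite {z \<in> sphere 0 r. taylor_fun a z = 0}"
  proof (cases "taylor_fun a constant_on S")
    case True
    then obtain c where c: "\<And>z. z \<in> S \<Longrightarrow> taylor_fun a z = c" by (auto simp: constant_on_def)
    show ?thesis
    proof (cases "c = 0")
      case True
      have "M1 a r = (1 / (2*pi)) * integral {0..2*pi} (\<lambda>\<theta>. 0)"
        unfolding M1_def
      proof (intro arg_cong[where f="\<lambda>x. (1 / (2*pi)) * x"] integral_cong)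
        fix \<theta> :: real
        have "complex_of_real r * exp (\<i> * complex_of_real \<theta>) \<in> S"
          using r by (auto simp: S_def norm_mult)
        then show "cmod (taylor_fun a (complex_of_real r * exp (\<i> * complex_of_real \<theta>))) = 0"
          using c True by simp
      qed
      then have "M1 a r = 0" by simp
      moreover have "0 < M1 a r" by (rule M1_pos[where a=a and n=n, OF an r])
      ultimately show ?thesis by simp
    next
      case False
      then have "{z \<in> sphere 0 r. taylor_fun a z = 0} = {}" using c sub by auto
      then show ?thesis by (simp only: finite.emptyI)
    qed
  next
    case False
    show ?thesis
      by (rule holomorphic_compact_finite_zeros[OF _ _ _ compact_sphere sub False])
         (auto simp: S_def tf_holo)
  qed
  have sub2: "{\<theta>. taylor_fun a (complex_of_real r * exp(\<i> * of_real \<theta>)) = 0}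
      \<subseteq> (\<Union>w\<in>{z \<in> sphere 0 r. taylor_fun a z = 0}. {\<theta>. complex_of_real r * exp(\<i> * of_real \<theta>) = w})"
    using r by (auto simp: norm_mult)
  have cnt: "countable {\<theta>. complex_of_real r * exp(\<i> * of_real \<theta>) = w}" for w
  proof (cases "{\<theta>. complex_of_real r * exp(\<i> * of_real \<theta>) = w} = {}")
    case False
    then obtain \<theta>0 where t0: "complex_of_real r * exp(\<i> * of_real \<theta>0) = w" by auto
    have "{\<theta>. complex_of_real r * exp(\<i> * of_real \<theta>) = w} \<subseteq> range (\<lambda>n::int. \<theta>0 + of_int (2 * n) * pi)"
    proof
      fix \<theta> assume "\<theta> \<in> {\<theta>. complex_of_real r * exp(\<i> * of_real \<theta>) = w}"
      then have "complex_of_real r * exp(\<i> * of_real \<theta>) = complex_of_real r * exp(\<i> * of_real \<theta>0)"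
        using t0 by simp
      then have "exp(\<i> * of_real \<theta>) = exp(\<i> * of_real \<theta>0)" using r by simp
      then show "\<theta> \<in> range (\<lambda>n::int. \<theta>0 + of_int (2 * n) * pi)" by (rule exp_i_eq_imp)
    qed
    then show ?thesis by (rule countable_subset) simp
  qed simp
  have "countable {\<theta>. taylor_fun a (complex_of_real r * exp(\<i> * of_real \<theta>)) = 0}"
    by (rule countable_subset[OF sub2], rule countable_UN[OF countable_finite[OF fin]], rule cnt)
  then show ?thesis by (rule negligible_countable_set)
qed


definition hh :: "(nat \<Rightarrow> complex) \<Rightarrow> real \<Rightarrow> real \<Rightarrow> real" where
  "hh a r \<theta> = cmod (taylor_fun a (complex_of_real r * exp(\<i> * of_real \<theta>)))"

definition gg :: "(nat \<Rightarrow> complex) \<Rightarrow> real \<Rightarrow> real \<Rightarrow> real" where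
  "gg a r \<theta> = inner (exp(\<i> * of_real \<theta>) * fd a (complex_of_real r * exp(\<i> * of_real \<theta>)))
                   (sgn (taylor_fun a (complex_of_real r * exp(\<i> * of_real \<theta>))))"

lemma M1_hh: "M1 a r = (1 / (2*pi)) * integral {0..2*pi} (hh a r)"
  unfolding M1_def hh_def ..

lemma hh_deriv:
  assumes r0: "ereal \<bar>r0\<bar> < conv_radius a"
    and nz: "taylor_fun a (complex_of_real r0 * exp(\<i> * of_real \<theta>)) \<noteq> 0"
  shows "((\<lambda>r. hh a r \<theta>) has_real_derivative gg a r0 \<theta>) (at r0)"
proof -
  define e where "e = exp(\<i> * of_real \<theta>)"
  define F where "F r = taylor_fun a (complex_of_real r * e)" for r
  have ne: "norm e = 1" unfolding e_def by simp
  have d1: "((\<lambda>r. complex_of_real r * e) has_vector_derivative e) (at r0)"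
    using has_vector_derivative_real_field[of "\<lambda>z. z * e" e r0 UNIV]
    by (auto intro!: derivative_eq_intros)
  have d2: "(taylor_fun a has_field_derivative fd a (complex_of_real r0 * e)) (at (complex_of_real r0 * e))"
    by (rule tf_deriv) (use r0 ne in \<open>simp add: norm_mult\<close>)
  have dF: "(F has_vector_derivative (e * fd a (complex_of_real r0 * e))) (at r0)"
    using field_vector_diff_chain_at[OF d1 d2] unfolding F_def by (simp add: o_def)
  have dN: "((\<lambda>x. norm x) has_derivative (\<lambda>h. inner h (sgn (F r0)))) (at (F r0))"
    by (rule has_derivative_norm) (use nz in \<open>simp add: F_def e_def\<close>)
  have "((\<lambda>r. norm (F r)) has_derivative ((\<lambda>h. inner h (sgn (F r0))) \<circ> (\<lambda>h. h *\<^sub>R (e * fd a (complex_of_real r0 * e))))) (at r0)"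
    using diff_chain_at[OF dF[unfolded has_vector_derivative_def] dN] by (simp add: o_def)
  moreover have "((\<lambda>h. inner h (sgn (F r0))) \<circ> (\<lambda>h. h *\<^sub>R (e * fd a (complex_of_real r0 * e)))) = (*) (gg a r0 \<theta>)"
    by (auto simp: fun_eq_iff gg_def F_def e_def)
  ultimately show ?thesis
    unfolding has_field_derivative_def by (simp add: hh_def F_def e_def)
qed

lemma gg_bound: "\<bar>gg a r \<theta>\<bar> \<le> norm (fd a (complex_of_real r * exp(\<i> * of_real \<theta>)))"
proof -
  have "\<bar>gg a r \<theta>\<bar> \<le> norm (exp(\<i> * of_real \<theta>) * fd a (complex_of_real r * exp(\<i> * of_real \<theta>)))
          * norm (sgn (taylor_fun a (complex_of_real r * exp(\<i> * of_real \<theta>))))"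
    unfolding gg_def by (rule Cauchy_Schwarz_ineq2)
  also have "\<dots> \<le> norm (fd a (complex_of_real r * exp(\<i> * of_real \<theta>)))"
    by (simp add: norm_mult norm_sgn mult_left_le)
  finally show ?thesis .
qed

lemma gg_cont:
  assumes r0: "ereal \<bar>r0\<bar> < conv_radius a"
    and nz: "taylor_fun a (complex_of_real r0 * exp(\<i> * of_real \<theta>)) \<noteq> 0"
  shows "((\<lambda>r. gg a r \<theta>) \<longlongrightarrow> gg a r0 \<theta>) (at r0)"
proof -
  define e where "e = exp(\<i> * of_real \<theta>)"
  have ne: "norm e = 1" unfolding e_def by simp
  have inb: "complex_of_real r0 * e \<in> eball 0 (conv_radius a)" using r0 ne by (simp add: norm_mult)
  have c1: "isCont (taylor_fun a) (complex_of_real r0 * e)"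
    using tf_cont inb continuous_on_eq_continuous_at[OF open_eball] by blast
  have c2: "isCont (fd a) (complex_of_real r0 * e)"
    using fd_cont inb continuous_on_eq_continuous_at[OF open_eball] by blast
  have l0: "((\<lambda>r. complex_of_real r * e) \<longlongrightarrow> complex_of_real r0 * e) (at r0)"
    by (intro tendsto_intros)
  have l1: "((\<lambda>r. taylor_fun a (complex_of_real r * e)) \<longlongrightarrow> taylor_fun a (complex_of_real r0 * e)) (at r0)"
    by (rule isCont_tendsto_compose[OF c1 l0])
  have l2: "((\<lambda>r. fd a (complex_of_real r * e)) \<longlongrightarrow> fd a (complex_of_real r0 * e)) (at r0)"
    by (rule isCont_tendsto_compose[OF c2 l0])
  have "((\<lambda>r. inner (e * fd a (complex_of_real r * e)) (sgn (taylor_fun a (complex_of_real r * e))))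
      \<longlongrightarrow> inner (e * fd a (complex_of_real r0 * e)) (sgn (taylor_fun a (complex_of_real r0 * e)))) (at r0)"
    by (intro tendsto_inner tendsto_mult tendsto_const l2 tendsto_sgn l1) (use nz in \<open>simp add: e_def\<close>)
  then show ?thesis unfolding gg_def e_def .
qed


definition DM :: "(nat \<Rightarrow> complex) \<Rightarrow> real \<Rightarrow> real" where
  "DM a r = (1 / (2*pi)) * integral {0..2*pi} (gg a r)"

lemma loc_setup:
  assumes "0 < r0" "ereal r0 < conv_radius a"
  obtains \<rho> B where "r0 < \<rho>" "ereal \<rho> < conv_radius a" "0 \<le> B"
    "\<And>z. z \<in> cball 0 \<rho> \<Longrightarrow> norm (fd a z) \<le> B"
proof -
  obtain \<rho> where \<rho>: "ereal r0 < ereal \<rho>" "ereal \<rho> < conv_radius a"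
    using ereal_dense2[OF assms(2)] by blast
  have "cball (0::complex) \<rho> \<subseteq> eball 0 (conv_radius a)"
  proof
    fix z :: complex assume "z \<in> cball 0 \<rho>"
    then have "ereal (norm z) \<le> ereal \<rho>" by simp
    then have "ereal (norm z) < conv_radius a" using \<rho>(2) by (rule order.strict_trans1)
    then show "z \<in> eball 0 (conv_radius a)" by simp
  qed
  then have "compact (fd a ` cball 0 \<rho>)"
    by (intro compact_continuous_image continuous_on_subset[OF fd_cont]) auto
  then have "bounded (fd a ` cball 0 \<rho>)" by (rule compact_imp_bounded)
  then obtain B where B: "B > 0" "\<forall>x\<in>fd a ` cball 0 \<rho>. norm x \<le> B"
    unfolding bounded_pos by blast
  show ?thesis by (rule that[of \<rho> B]) (use \<rho> B in simp_all)
qed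

lemma hh_lip:
  assumes "ereal \<rho> < conv_radius a" "\<And>z. z \<in> cball 0 \<rho> \<Longrightarrow> norm (fd a z) \<le> B"
    and "\<bar>r\<bar> \<le> \<rho>" "\<bar>s\<bar> \<le> \<rho>"
  shows "\<bar>hh a r \<theta> - hh a s \<theta>\<bar> \<le> B * \<bar>r - s\<bar>"
proof -
  define e where "e = exp(\<i> * of_real \<theta>)"
  have ne: "norm e = 1" unfolding e_def by simp
  have "\<bar>hh a r \<theta> - hh a s \<theta>\<bar> \<le> norm (taylor_fun a (complex_of_real r * e) - taylor_fun a (complex_of_real s * e))"
    unfolding hh_def e_def by (rule norm_triangle_ineq3)
  also have "\<dots> \<le> B * norm (complex_of_real r * e - complex_of_real s * e)"
  proof (rule field_differentiable_bound[OF convex_cball])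
    fix z assume z: "z \<in> cball (0::complex) \<rho>"
    then have "ereal (norm z) \<le> ereal \<rho>" by simp
    then have "ereal (norm z) < conv_radius a" using assms(1) order.strict_trans1 by blast
    then show "(taylor_fun a has_field_derivative fd a z) (at z within cball 0 \<rho>)" by (rule tf_deriv)
    show "norm (fd a z) \<le> B" using z assms(2) by blast
  qed (use assms ne in \<open>auto simp: norm_mult\<close>)
  also have "norm (complex_of_real r * e - complex_of_real s * e) = \<bar>r - s\<bar>"
    using ne by (simp add: left_diff_distrib[symmetric] norm_mult flip: of_real_diff)
  finally show ?thesis .
qed

lemma hh_int:
  assumes "ereal \<bar>r\<bar> < conv_radius a"
  shows "hh a r integrable_on {0..2*pi}"
  unfolding hh_def
  by (intro integrable_continuous_interval continuous_intros continuous_on_subset[OF tf_circle_cont]) (use assms in auto)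

lemma M1_deriv:
  assumes an: "a n \<noteq> 0" and r0: "0 < r0" "ereal r0 < conv_radius a"
  shows "(M1 a has_real_derivative DM a r0) (at r0)" "gg a r0 integrable_on {0..2*pi}"
proof -
  obtain \<rho> B where \<rho>: "r0 < \<rho>" "ereal \<rho> < conv_radius a" "0 \<le> B"
    and B: "\<And>z. z \<in> cball 0 \<rho> \<Longrightarrow> norm (fd a z) \<le> B"
    using loc_setup[OF r0] by blast
  define I where "I = {0<..<\<rho>}"
  define N where "N = {\<theta>. taylor_fun a (complex_of_real r0 * exp(\<i> * of_real \<theta>)) = 0}"
  have inI: "ereal \<bar>x\<bar> < conv_radius a" if "x \<in> I" for x
  proof -
    have "ereal \<bar>x\<bar> \<le> ereal \<rho>" using that by (auto simp: I_def)
    then show ?thesis using \<rho>(2) order.strict_trans1 by blast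
  qed
  have p1: "open I" unfolding I_def by simp
  have p2: "r0 \<in> I" unfolding I_def using \<rho> r0 by simp
  have p3: "\<And>x. x \<in> I \<Longrightarrow> hh a x integrable_on {0..2*pi}" by (rule hh_int[OF inI])
  have p4: "\<And>x \<theta>. x \<in> I \<Longrightarrow> \<theta> \<in> {0..2*pi} \<Longrightarrow> \<bar>hh a x \<theta> - hh a r0 \<theta>\<bar> \<le> B * \<bar>x - r0\<bar>"
    by (rule hh_lip[OF \<rho>(2) B]) (use \<rho> r0 in \<open>auto simp: I_def\<close>)
  have p5: "negligible N" unfolding N_def by (rule zeros_negl[OF an r0])
  have p6: "\<And>\<theta>. \<theta> \<in> {0..2*pi} - N \<Longrightarrow> ((\<lambda>x. hh a x \<theta>) has_real_derivative gg a r0 \<theta>) (at r0)"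
    by (rule hh_deriv) (use r0 in \<open>auto simp: N_def\<close>)
  note D = deriv_under_int[of I r0 "hh a" 0 "2*pi" B N "gg a r0", OF p1 p2 p3 p4 p5 p6]
  have D1: "((\<lambda>x. integral {0..2*pi} (hh a x)) has_real_derivative integral {0..2*pi} (gg a r0)) (at r0)
      \<and> gg a r0 integrable_on {0..2*pi}" using D by blast
  then show "gg a r0 integrable_on {0..2*pi}" by blast
  have "M1 a = (\<lambda>r. (1 / (2*pi)) * integral {0..2*pi} (hh a r))"
    by (simp add: fun_eq_iff M1_hh)
  then show "(M1 a has_real_derivative DM a r0) (at r0)"
    unfolding DM_def using DERIV_cmult[OF D1[THEN conjunct1], of "1 / (2*pi)"] by simp
qed

lemma DM_cont:
  assumes an: "a n \<noteq> 0" and r0: "0 < r0" "ereal r0 < conv_radius a"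
  shows "isCont (DM a) r0"
proof -
  obtain \<rho> B where \<rho>: "r0 < \<rho>" "ereal \<rho> < conv_radius a" "0 \<le> B"
    and B: "\<And>z. z \<in> cball 0 \<rho> \<Longrightarrow> norm (fd a z) \<le> B"
    using loc_setup[OF r0] by blast
  define I where "I = {0<..<\<rho>}"
  define N where "N = {\<theta>. taylor_fun a (complex_of_real r0 * exp(\<i> * of_real \<theta>)) = 0}"
  have inI: "ereal x < conv_radius a" "0 < x" if "x \<in> I" for x
  proof -
    have "ereal x \<le> ereal \<rho>" using that by (auto simp: I_def)
    then show "ereal x < conv_radius a" using \<rho>(2) order.strict_trans1 by blast
    show "0 < x" using that by (auto simp: I_def)
  qed
  have "isCont (\<lambda>x. integral {0..2*pi} (gg a x)) r0"
  proof (rule cont_under_int[of I r0 "gg a" 0 "2*pi" B N])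
    show "open I" unfolding I_def by simp
    show "r0 \<in> I" unfolding I_def using \<rho> r0 by simp
    show "\<And>x. x \<in> I \<Longrightarrow> gg a x integrable_on {0..2*pi}"
      by (rule M1_deriv(2)[where a=a and n=n, OF an]) (use inI in auto)
    show "\<bar>gg a x \<theta>\<bar> \<le> B" if "x \<in> I" "\<theta> \<in> {0..2*pi}" for x \<theta>
    proof -
      have "\<bar>gg a x \<theta>\<bar> \<le> norm (fd a (complex_of_real x * exp(\<i> * of_real \<theta>)))" by (rule gg_bound)
      also have "\<dots> \<le> B" by (rule B) (use that in \<open>auto simp: I_def norm_mult\<close>)
      finally show ?thesis .
    qed
    show "negligible N" unfolding N_def by (rule zeros_negl[OF an r0])
    show "\<And>\<theta>. \<theta> \<in> {0..2*pi} - N \<Longrightarrow> ((\<lambda>x. gg a x \<theta>) \<longlongrightarrow> gg a r0 \<theta>) (at r0)"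
      by (rule gg_cont) (use r0 in \<open>auto simp: N_def\<close>)
  qed
  then show ?thesis unfolding DM_def by (intro continuous_intros)
qed

lemma M1_C1:
  assumes an: "a n \<noteq> 0"
  shows "M1 a C1_differentiable_on {r. 0 < r \<and> ereal r < conv_radius a}"
  unfolding C1_differentiable_on_def
proof (intro exI conjI ballI)
  fix r assume "r \<in> {r. 0 < r \<and> ereal r < conv_radius a}"
  then show "(M1 a has_vector_derivative DM a r) (at r)"
    using M1_deriv(1)[where a=a and n=n, OF an] by (simp add: has_real_derivative_iff_has_vector_derivative)
next
  show "continuous_on {r. 0 < r \<and> ereal r < conv_radius a} (DM a)"
    by (intro continuous_at_imp_continuous_on ballI DM_cont[where a=a and n=n, OF an]) auto
qed


lemma inv_C1:
  fixes c :: real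
  assumes c: "c \<noteq> 0" and S: "\<And>r. r \<in> S \<Longrightarrow> 0 < r"
  shows "(\<lambda>r. inverse (c * r ^ n)) C1_differentiable_on S"
  unfolding C1_differentiable_on_def
proof (intro exI conjI ballI)
  fix r assume r: "r \<in> S"
  have "((\<lambda>r. c * r ^ n) has_real_derivative c * (real n * r ^ (n - 1))) (at r)"
    by (auto intro!: derivative_eq_intros)
  then have "((\<lambda>r. inverse (c * r ^ n)) has_real_derivative
      - (inverse (c * r ^ n) * (c * (real n * r ^ (n - 1))) * inverse (c * r ^ n))) (at r)"
    by (rule DERIV_inverse') (use c S[OF r] in simp)
  then show "((\<lambda>r. inverse (c * r ^ n)) has_vector_derivative
      - (inverse (c * r ^ n) * (c * (real n * r ^ (n - 1))) * inverse (c * r ^ n))) (at r)"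
    by (simp add: has_real_derivative_iff_has_vector_derivative)
next
  show "continuous_on S (\<lambda>r. - (inverse (c * r ^ n) * (c * (real n * r ^ (n - 1))) * inverse (c * r ^ n)))"
    by (intro continuous_intros) (use c S in fastforce)+
qed

theorem corollary4p2:
  fixes a :: "nat \<Rightarrow> complex" and n :: nat
  assumes "\<exists>k. a k \<noteq> 0"
    and "conv_radius a > 0"
    and "a n \<noteq> 0"
  shows "(\<lambda>r. kappa a n r) C1_differentiable_on {r. 0 < r \<and> ereal r < conv_radius a}
       \<and> convex_on {t. ereal (exp t) < conv_radius a} (\<lambda>t. ln (kappa a n (exp t)))"
proof
  have "(\<lambda>r. M1 a r * inverse (cmod (a n) * r ^ n)) C1_differentiable_on {r. 0 < r \<and> ereal r < conv_radius a}"
    by (intro C1_differentiable_on_mult M1_C1[where n=n] inv_C1) (use assms(3) in auto)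
  then show "(\<lambda>r. kappa a n r) C1_differentiable_on {r. 0 < r \<and> ereal r < conv_radius a}"
    by (simp add: kappa_def divide_inverse)
  show "convex_on {t. ereal (exp t) < conv_radius a} (\<lambda>t. ln (kappa a n (exp t)))"
    by (rule convex_part[where a=a and n=n, OF assms(3)])
qed

end
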